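(* Let $m$ be a positive integer. If $D$ is a quaternary near-extremal Hermitian self-dual code of length $6m$, then $A_{2i}(D) \equiv 0 \pmod 9$ for every $i = m, m+1, \ldots, 3m$, where $A_{j}(D)$ denotes the number of codewords of weight $j$ in $D$.
   Context: Let $\mathbb{F}_4=\{0,1,\omega,\omega^2\}$ with $\omega^2=\omega+1$. A quaternary code of length $n$ is a linear subspace of $\mathbb{F}_4^n$. The Hermitian inner product is $\langle x,y\rangle_H=\sum_{k=1}^n x_k y_k^2$, the Hermitian dual of $D$ is $D^{\perp_H}=\{x\in\mathbb{F}_4^n : \langle x,y\rangle_H=0 \text{ for all } y\in D\}$, and $D$ is Hermitian self-dual if $D=D^{\perp_H}$. The weight of a vector is the number of its nonzero coordinates, and the minimum weight is the smallest weight of a nonzero codeword. A quaternary Hermitian self-dual code of length $n$ is called near-extremal if its minimum weight equals $2\lfloor n/6\rfloor$; thus for length $6m$ the minimum weight is $2m$. *)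

theory Defs
  imports Main
begin

datatype f4 = Z4 | O4 | W4 | V4  (* V4 stands for w^2 *)

instantiation f4 :: field
begin

definition zero_f4 :: f4 where "zero_f4 = Z4"
definition one_f4 :: f4 where "one_f4 = O4"

fun plus_f4 :: "f4 \<Rightarrow> f4 \<Rightarrow> f4" where
  "plus_f4 Z4 y = y"
| "plus_f4 x Z4 = x"
| "plus_f4 O4 O4 = Z4" | "plus_f4 O4 W4 = V4" | "plus_f4 O4 V4 = W4"
| "plus_f4 W4 O4 = V4" | "plus_f4 W4 W4 = Z4" | "plus_f4 W4 V4 = O4"
| "plus_f4 V4 O4 = W4" | "plus_f4 V4 W4 = O4" | "plus_f4 V4 V4 = Z4"

definition uminus_f4 :: "f4 \<Rightarrow> f4" where "uminus_f4 x = x"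
definition minus_f4 :: "f4 \<Rightarrow> f4 \<Rightarrow> f4" where "minus_f4 x y = x + y"

fun times_f4 :: "f4 \<Rightarrow> f4 \<Rightarrow> f4" where
  "times_f4 Z4 y = Z4"
| "times_f4 x Z4 = Z4"
| "times_f4 O4 y = y"
| "times_f4 x O4 = x"
| "times_f4 W4 W4 = V4" | "times_f4 W4 V4 = O4"
| "times_f4 V4 W4 = O4" | "times_f4 V4 V4 = W4"

fun inverse_f4 :: "f4 \<Rightarrow> f4" where
  "inverse_f4 Z4 = Z4" | "inverse_f4 O4 = O4"
| "inverse_f4 W4 = V4" | "inverse_f4 V4 = W4"

definition divide_f4 :: "f4 \<Rightarrow> f4 \<Rightarrow> f4" where "divide_f4 x y = x * inverse y"

instance
proof (standard, goal_cases)
  case (1 a b c) then show ?case by (cases a; cases b; cases c) (simp_all add: zero_f4_def one_f4_def uminus_f4_def minus_f4_def divide_f4_def)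
next case (2 a b) then show ?case by (cases a; cases b) (simp_all add: zero_f4_def one_f4_def uminus_f4_def minus_f4_def divide_f4_def)
next case (3 a) then show ?case by (cases a) (simp_all add: zero_f4_def one_f4_def uminus_f4_def minus_f4_def divide_f4_def)
next case (4 a b c) then show ?case by (cases a; cases b; cases c) (simp_all add: zero_f4_def one_f4_def uminus_f4_def minus_f4_def divide_f4_def)
next case (5 a b) then show ?case by (cases a; cases b) (simp_all add: zero_f4_def one_f4_def uminus_f4_def minus_f4_def divide_f4_def)
next case (6 a) then show ?case by (cases a) (simp_all add: zero_f4_def one_f4_def uminus_f4_def minus_f4_def divide_f4_def)
next case (7 a) then show ?case by (cases a) (simp_all add: zero_f4_def one_f4_def uminus_f4_def minus_f4_def divide_f4_def)
next case (8 a b) then show ?case by (cases a; cases b) (simp_all add: zero_f4_def one_f4_def uminus_f4_def minus_f4_def divide_f4_def)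
next case (9 a b c) then show ?case by (cases a; cases b; cases c) (simp_all add: zero_f4_def one_f4_def uminus_f4_def minus_f4_def divide_f4_def)
next case 10 then show ?case by (simp_all add: zero_f4_def one_f4_def uminus_f4_def minus_f4_def divide_f4_def)
next case (11 a) then show ?case by (cases a) (simp_all add: zero_f4_def one_f4_def uminus_f4_def minus_f4_def divide_f4_def)
next case (12 a b) then show ?case by (cases a; cases b) (simp_all add: zero_f4_def one_f4_def uminus_f4_def minus_f4_def divide_f4_def)
next case 13 then show ?case by (simp_all add: zero_f4_def one_f4_def uminus_f4_def minus_f4_def divide_f4_def)
qed

end

definition omega :: f4 where "omega = W4"

lemma omega_sq: "omega ^ 2 = omega + 1"
  by (simp add: omega_def one_f4_def power2_eq_square)

definition vec_space :: "nat \<Rightarrow> f4 list set" where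
  "vec_space n = {x. length x = n}"

definition vadd :: "f4 list \<Rightarrow> f4 list \<Rightarrow> f4 list" where
  "vadd x y = map2 (+) x y"

definition vscale :: "f4 \<Rightarrow> f4 list \<Rightarrow> f4 list" where
  "vscale c x = map (\<lambda>a. c * a) x"

definition quaternary_code :: "nat \<Rightarrow> f4 list set \<Rightarrow> bool" where
  "quaternary_code n D \<longleftrightarrow> D \<subseteq> vec_space n \<and> replicate n 0 \<in> D \<and>
     (\<forall>x\<in>D. \<forall>y\<in>D. vadd x y \<in> D) \<and> (\<forall>c. \<forall>x\<in>D. vscale c x \<in> D)"

definition herm_ip :: "f4 list \<Rightarrow> f4 list \<Rightarrow> f4" where
  "herm_ip x y = (\<Sum>k<length x. x ! k * (y ! k) ^ 2)"

definition herm_dual :: "nat \<Rightarrow> f4 list set \<Rightarrow> f4 list set" where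
  "herm_dual n D = {x \<in> vec_space n. \<forall>y\<in>D. herm_ip x y = 0}"

definition herm_self_dual :: "nat \<Rightarrow> f4 list set \<Rightarrow> bool" where
  "herm_self_dual n D \<longleftrightarrow> quaternary_code n D \<and> D = herm_dual n D"

definition wt :: "f4 list \<Rightarrow> nat" where
  "wt x = card {k. k < length x \<and> x ! k \<noteq> 0}"

definition min_weight :: "nat \<Rightarrow> f4 list set \<Rightarrow> nat" where
  "min_weight n D = Min {wt x | x. x \<in> D \<and> x \<noteq> replicate n 0}"

definition near_extremal :: "nat \<Rightarrow> f4 list set \<Rightarrow> bool" where
  "near_extremal n D \<longleftrightarrow> herm_self_dual n D \<and> min_weight n D = 2 * (n div 6)"

definition A_count :: "f4 list set \<Rightarrow> nat \<Rightarrow> nat" where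
  "A_count D j = card {x \<in> D. wt x = j}"

end

theory Submission
  imports Defs "HOL-Computational_Algebra.Polynomial_Factorial" "HOL-Computational_Algebra.Field_as_Ring"
begin

lemma UNIV_f4: "(UNIV::f4 set) = {Z4,O4,W4,V4}"
  using f4.exhaust by auto

instance f4 :: finite
  by standard (simp add: UNIV_f4)

lemma f4_simps [simp]: "(0::f4) = Z4" "(1::f4) = O4"
  by (simp_all add: zero_f4_def one_f4_def)

definition chi :: "f4 \<Rightarrow> int" where
  "chi a = (if a = Z4 \<or> a = O4 then 1 else -1)"

lemma chi_add: "chi (a + b) = chi a * chi b"
  by (cases a; cases b) (simp_all add: chi_def)

lemma chi_sum: "finite A \<Longrightarrow> chi (\<Sum>k\<in>A. f k) = (\<Prod>k\<in>A. chi (f k))"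
  by (induction A rule: finite_induct) (simp_all add: chi_add, simp add: chi_def)

lemma sq_add_f4: "((a::f4) + b)^2 = a^2 + b^2"
  by (cases a; cases b) (simp_all add: power2_eq_square)

lemma sq_mult_f4: "((a::f4) * b)^2 = a^2 * b^2"
  by (simp add: power_mult_distrib)

lemma vadd_nth: "length c = length d \<Longrightarrow> k < length c \<Longrightarrow> vadd c d ! k = c ! k + d ! k"
  by (simp add: vadd_def)

lemma vadd_length: "length c = length d \<Longrightarrow> length (vadd c d) = length c"
  by (simp add: vadd_def)

lemma vscale_nth: "k < length c \<Longrightarrow> vscale s c ! k = s * c ! k"
  by (simp add: vscale_def)

lemma vscale_length [simp]: "length (vscale s c) = length c"
  by (simp add: vscale_def)

lemma f4_add_self: "(a::f4) + a = 0"
  by (cases a) simp_all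

lemma vadd_vadd: "length c = length d \<Longrightarrow> vadd (vadd c d) d = c"
  by (rule nth_equalityI) (simp_all add: vadd_length vadd_nth add.assoc f4_add_self)

lemma herm_ip_vadd:
  assumes "length c = length u" "length d = length u"
  shows "herm_ip u (vadd c d) = herm_ip u c + herm_ip u d"
  unfolding herm_ip_def
  by (simp add: assms vadd_nth sq_add_f4 distrib_left sum.distrib)

lemma herm_ip_vscale:
  assumes "length c = length u"
  shows "herm_ip u (vscale s c) = s^2 * herm_ip u c"
  unfolding herm_ip_def
  by (simp add: assms vscale_nth sq_mult_f4 sum_distrib_left mult.assoc mult.left_commute)

lemma chi_exists_neg: "(a::f4) \<noteq> 0 \<Longrightarrow> \<exists>s. chi (s^2 * a) = -1"
proof -
  assume "a \<noteq> 0"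
  then have "a = O4 \<or> a = W4 \<or> a = V4" by (cases a) simp_all
  then show ?thesis
  proof (elim disjE)
    assume "a = O4" then show ?thesis by (intro exI[of _ W4]) (simp add: chi_def power2_eq_square)
  next
    assume "a = W4" then show ?thesis by (intro exI[of _ O4]) (simp add: chi_def power2_eq_square)
  next
    assume "a = V4" then show ?thesis by (intro exI[of _ O4]) (simp add: chi_def power2_eq_square)
  qed
qed

lemma char_sum:
  assumes fin: "finite K" and len: "\<And>c. c \<in> K \<Longrightarrow> length c = length u"
    and add: "\<And>c d. c \<in> K \<Longrightarrow> d \<in> K \<Longrightarrow> vadd c d \<in> K"
    and sc: "\<And>s c. c \<in> K \<Longrightarrow> vscale s c \<in> K"
  shows "(\<Sum>c\<in>K. chi (herm_ip u c)) = (if \<forall>c\<in>K. herm_ip u c = 0 then int (card K) else 0)"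
proof (cases "\<forall>c\<in>K. herm_ip u c = 0")
  case True
  then show ?thesis by (simp add: chi_def)
next
  case False
  then obtain c1 where c1: "c1 \<in> K" "herm_ip u c1 \<noteq> 0" by auto
  then obtain s where s: "chi (s^2 * herm_ip u c1) = -1" using chi_exists_neg by blast
  define d where "d = vscale s c1"
  have dK: "d \<in> K" using sc c1 d_def by auto
  have chid: "chi (herm_ip u d) = -1" using s len[OF c1(1)] by (simp add: d_def herm_ip_vscale)
  have "(\<Sum>c\<in>K. chi (herm_ip u c)) = (\<Sum>c\<in>K. chi (herm_ip u (vadd c d)))"
    by (rule sum.reindex_bij_witness[where i="\<lambda>c. vadd c d" and j="\<lambda>c. vadd c d"])
       (auto simp: vadd_vadd len dK add)
  also have "\<dots> = (\<Sum>c\<in>K. - chi (herm_ip u c))"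
    by (rule sum.cong) (auto simp: herm_ip_vadd len dK chi_add chid)
  finally have "(\<Sum>c\<in>K. chi (herm_ip u c)) = 0" by (simp add: sum_negf)
  with False show ?thesis by auto
qed

lemma vec_space_Suc: "vec_space (Suc n) = (\<lambda>(a,xs). a # xs) ` (UNIV \<times> vec_space n)"
  unfolding vec_space_def
  by (auto simp: image_iff length_Suc_conv)

lemma finite_vec_space: "finite (vec_space n)"
  using finite_lists_length_eq[OF finite_UNIV, of n] by (simp add: vec_space_def)

lemma sum_prod_vec:
  fixes F :: "nat \<Rightarrow> f4 \<Rightarrow> 'r::comm_semiring_1"
  shows "(\<Sum>u\<in>vec_space n. \<Prod>k<n. F k (u!k)) = (\<Prod>k<n. \<Sum>a\<in>UNIV. F k a)"
proof (induction n arbitrary: F)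
  case 0
  then show ?case by (simp add: vec_space_def)
next
  case (Suc n)
  have inj: "inj_on (\<lambda>(a,xs). a # xs) (UNIV \<times> vec_space n)" by (auto simp: inj_on_def)
  have "(\<Sum>u\<in>vec_space (Suc n). \<Prod>k<Suc n. F k (u!k))
      = (\<Sum>(a,xs)\<in>UNIV \<times> vec_space n. \<Prod>k<Suc n. F k ((a#xs)!k))"
    unfolding vec_space_Suc by (subst sum.reindex[OF inj]) (simp add: case_prod_unfold)
  also have "\<dots> = (\<Sum>(a,xs)\<in>UNIV \<times> vec_space n. F 0 a * (\<Prod>k<n. F (Suc k) (xs!k)))"
    by (simp only: prod.lessThan_Suc_shift nth_Cons_0 nth_Cons_Suc)
  also have "\<dots> = (\<Sum>a\<in>UNIV. \<Sum>xs\<in>vec_space n. F 0 a * (\<Prod>k<n. F (Suc k) (xs!k)))"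
    by (simp add: sum.cartesian_product)
  also have "\<dots> = (\<Sum>a\<in>UNIV. F 0 a) * (\<Sum>xs\<in>vec_space n. \<Prod>k<n. F (Suc k) (xs!k))"
    by (simp add: sum_distrib_left sum_distrib_right sum.swap[where A=UNIV])
  also have "\<dots> = (\<Sum>a\<in>UNIV. F 0 a) * (\<Prod>k<n. \<Sum>a\<in>UNIV. F (Suc k) a)"
    using Suc.IH[of "\<lambda>k. F (Suc k)"] by simp
  also have "\<dots> = (\<Prod>k<Suc n. \<Sum>a\<in>UNIV. F k a)"
    by (simp only: prod.lessThan_Suc_shift)
  finally show ?case .
qed


definition wp :: "nat \<Rightarrow> f4 list \<Rightarrow> nat" where
  "wp p c = card {k. k < length c \<and> k \<noteq> p \<and> c ! k \<noteq> 0}"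

abbreviation XX :: "int poly" where "XX \<equiv> [:0,1:]"

definition gk :: "nat \<Rightarrow> nat \<Rightarrow> f4 \<Rightarrow> int poly" where
  "gk p k b = (if k \<noteq> p \<and> b \<noteq> 0 then XX else 1)"

definition GG :: "nat \<Rightarrow> nat \<Rightarrow> f4 \<Rightarrow> int poly" where
  "GG p k b = (if k = p then (if b = 0 then 4 else 0) else (if b = 0 then 1 + 3 * XX else 1 - XX))"

lemma prod_if_pow: "(\<Prod>k<(n::nat). if P k then (x::'a::comm_monoid_mult) else 1) = x ^ card {k. k < n \<and> P k}"
proof -
  have f: "finite {..<n}" by simp
  show ?thesis using prod.inter_filter[OF f, of "\<lambda>_. x" P] by simp
qed

lemma pow_wp: "length u = n \<Longrightarrow> XX ^ wp p u = (\<Prod>k<n. gk p k (u!k))"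
  unfolding gk_def wp_def by (simp add: prod_if_pow)

lemma GG_eq: "(\<Sum>a\<in>UNIV. of_int (chi (a * b^2)) * gk p k a) = GG p k b"
  unfolding UNIV_f4 GG_def gk_def
  by (cases b; cases "k = p") (simp_all add: chi_def power2_eq_square numeral_poly)

lemma prod_GG:
  assumes "length c = n" "p < n"
  shows "(\<Prod>k<n. GG p k (c!k)) =
     (if c!p = 0 then 4 * (1 + 3*XX)^(n - 1 - wp p c) * (1 - XX)^(wp p c) else 0)"
proof (cases "c!p = 0")
  case False
  have "(\<Prod>k<n. GG p k (c!k)) = 0"
    by (rule prod_zero) (use assms False in \<open>auto simp: GG_def\<close>)
  then show ?thesis using False by simp
next
  case True
  have ins: "{..<n} = insert p ({..<n} - {p})" using assms by auto
  have "(\<Prod>k<n. GG p k (c!k)) = GG p p (c!p) * (\<Prod>k\<in>{..<n}-{p}. GG p k (c!k))"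
    by (subst ins, subst prod.insert) auto
  also have "(\<Prod>k\<in>{..<n}-{p}. GG p k (c!k)) = (\<Prod>k\<in>{..<n}-{p}. if c!k = 0 then 1 + 3*XX else 1 - XX)"
    by (rule prod.cong) (auto simp: GG_def)
  also have "\<dots> = (\<Prod>k\<in>({..<n}-{p}) \<inter> {k. c!k = 0}. 1 + 3*XX) * (\<Prod>k\<in>({..<n}-{p}) \<inter> - {k. c!k = 0}. 1 - XX)"
    by (rule prod.If_cases) simp
  also have "\<dots> = (1 + 3*XX)^card (({..<n}-{p}) \<inter> {k. c!k = 0}) * (1 - XX)^card (({..<n}-{p}) \<inter> - {k. c!k = 0})"
    by simp
  also have "({..<n}-{p}) \<inter> - {k. c!k = 0} = {k. k < length c \<and> k \<noteq> p \<and> c ! k \<noteq> 0}"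
    using assms by auto
  also have "card (({..<n}-{p}) \<inter> {k. c!k = 0}) = n - 1 - wp p c"
  proof -
    have "card (({..<n}-{p}) \<inter> {k. c!k = 0}) + card (({..<n}-{p}) \<inter> - {k. c!k = 0}) = card ({..<n}-{p})"
      by (rule card_Int_Diff[symmetric, unfolded Diff_eq]) simp
    also have "card ({..<n}-{p}) = n - 1" using assms by simp
    also have "({..<n}-{p}) \<inter> - {k. c!k = 0} = {k. k < length c \<and> k \<noteq> p \<and> c ! k \<noteq> 0}"
      using assms by auto
    finally show ?thesis unfolding wp_def by linarith
  qed
  finally show ?thesis using True by (simp add: GG_def wp_def)
qed

lemma ghat:
  assumes "length c = n" "p < n"
  shows "(\<Sum>u\<in>vec_space n. of_int (chi (herm_ip u c)) * XX ^ wp p u) =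
     (if c!p = 0 then 4 * (1 + 3*XX)^(n - 1 - wp p c) * (1 - XX)^(wp p c) else 0)"
proof -
  have "(\<Sum>u\<in>vec_space n. of_int (chi (herm_ip u c)) * XX ^ wp p u)
      = (\<Sum>u\<in>vec_space n. \<Prod>k<n. of_int (chi (u!k * (c!k)^2)) * gk p k (u!k))"
  proof (rule sum.cong[OF refl])
    fix u assume u: "u \<in> vec_space n"
    then have lu: "length u = n" by (simp add: vec_space_def)
    have "of_int (chi (herm_ip u c)) = (\<Prod>k<n. (of_int (chi (u!k * (c!k)^2)) :: int poly))"
      unfolding herm_ip_def lu by (simp add: chi_sum)
    then show "of_int (chi (herm_ip u c)) * XX ^ wp p u = (\<Prod>k<n. of_int (chi (u!k * (c!k)^2)) * gk p k (u!k))"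
      by (simp add: pow_wp[OF lu] prod.distrib)
  qed
  also have "\<dots> = (\<Prod>k<n. \<Sum>a\<in>UNIV. of_int (chi (a * (c!k)^2)) * gk p k a)"
    by (rule sum_prod_vec)
  also have "\<dots> = (\<Prod>k<n. GG p k (c!k))" by (simp add: GG_eq)
  finally show ?thesis using prod_GG[OF assms] by simp
qed

lemma sd_facts:
  assumes "herm_self_dual n D"
  shows "D \<subseteq> vec_space n" "replicate n 0 \<in> D"
    "\<And>x y. x \<in> D \<Longrightarrow> y \<in> D \<Longrightarrow> vadd x y \<in> D"
    "\<And>c x. x \<in> D \<Longrightarrow> vscale c x \<in> D"
    "\<And>u. u \<in> D \<longleftrightarrow> u \<in> vec_space n \<and> (\<forall>y\<in>D. herm_ip u y = 0)"
    "finite D"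
proof -
  have q: "quaternary_code n D" and e: "D = herm_dual n D"
    using assms by (auto simp: herm_self_dual_def)
  show "D \<subseteq> vec_space n" "replicate n 0 \<in> D"
    "\<And>x y. x \<in> D \<Longrightarrow> y \<in> D \<Longrightarrow> vadd x y \<in> D"
    "\<And>c x. x \<in> D \<Longrightarrow> vscale c x \<in> D" using q by (auto simp: quaternary_code_def)
  show "\<And>u. u \<in> D \<longleftrightarrow> u \<in> vec_space n \<and> (\<forall>y\<in>D. herm_ip u y = 0)"
    by (subst e) (simp add: herm_dual_def)
  show "finite D" using q finite_vec_space finite_subset by (auto simp: quaternary_code_def)
qed

lemma macwilliams:
  assumes sd: "herm_self_dual n D" and p: "p < n"
  shows "of_nat (card D) * (\<Sum>u\<in>D. XX ^ wp p u) =
    (\<Sum>c\<in>D. if c!p = 0 then 4 * (1 + 3*XX)^(n - 1 - wp p c) * (1 - XX)^(wp p c) else 0)"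
proof -
  note f = sd_facts[OF sd]
  have len: "\<And>c. c \<in> D \<Longrightarrow> length c = n" using f(1) by (auto simp: vec_space_def)
  have "(\<Sum>c\<in>D. if c!p = 0 then 4 * (1 + 3*XX)^(n - 1 - wp p c) * (1 - XX)^(wp p c) else 0)
      = (\<Sum>c\<in>D. \<Sum>u\<in>vec_space n. of_int (chi (herm_ip u c)) * XX ^ wp p u)"
    by (rule sum.cong[OF refl]) (simp add: ghat[OF len p])
  also have "\<dots> = (\<Sum>u\<in>vec_space n. of_int (\<Sum>c\<in>D. chi (herm_ip u c)) * XX ^ wp p u)"
    by (subst sum.swap) (simp add: sum_distrib_right)
  also have "\<dots> = (\<Sum>u\<in>vec_space n. if u \<in> D then of_nat (card D) * XX ^ wp p u else 0)"
  proof (rule sum.cong[OF refl])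
    fix u assume u: "u \<in> vec_space n"
    then have lu: "length u = n" by (simp add: vec_space_def)
    have "(\<Sum>c\<in>D. chi (herm_ip u c)) = (if \<forall>c\<in>D. herm_ip u c = 0 then int (card D) else 0)"
      by (rule char_sum) (use f(3,4,6) len lu in auto)
    also have "(\<forall>c\<in>D. herm_ip u c = 0) \<longleftrightarrow> u \<in> D" using f(5)[of u] u by blast
    finally show "of_int (\<Sum>c\<in>D. chi (herm_ip u c)) * XX ^ wp p u = (if u \<in> D then of_nat (card D) * XX ^ wp p u else 0)"
      by simp
  qed
  also have "\<dots> = (\<Sum>u\<in>D. of_nat (card D) * XX ^ wp p u)"
    using f(1) finite_vec_space by (simp add: sum.If_cases Int_absorb1)
  finally show ?thesis by (simp add: sum_distrib_left)
qed


lemma of_nat_f4: "(of_nat k :: f4) = (if even k then Z4 else O4)"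
  by (induction k) auto

lemma cube_f4: "(a::f4) * a^2 = (if a = Z4 then Z4 else O4)"
  by (cases a) (simp_all add: power2_eq_square)

lemma sum_if_card: "finite A \<Longrightarrow> (\<Sum>k\<in>A. if P k then (1::'a::comm_semiring_1) else 0) = of_nat (card {k\<in>A. P k})"
  by (simp add: sum.inter_filter[symmetric])

lemma herm_ip_self: "herm_ip c c = of_nat (wt c)"
proof -
  have "herm_ip c c = (\<Sum>k<length c. if c!k \<noteq> 0 then (1::f4) else 0)"
    unfolding herm_ip_def by (rule sum.cong) (auto simp: cube_f4)
  also have "\<dots> = of_nat (card {k\<in>{..<length c}. c!k \<noteq> 0})" by (rule sum_if_card) simp
  also have "{k\<in>{..<length c}. c!k \<noteq> 0} = {k. k < length c \<and> c!k \<noteq> 0}" by auto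
  finally show ?thesis by (simp add: wt_def)
qed

lemma wt_even:
  assumes sd: "herm_self_dual n D" and c: "c \<in> D"
  shows "even (wt c)"
proof -
  have "herm_ip c c = 0" using sd_facts(5)[OF sd, of c] c by blast
  then show ?thesis by (simp add: herm_ip_self of_nat_f4 split: if_splits)
qed

lemma card_orbit3:
  assumes "finite S" "\<forall>x\<in>S. f x \<in> S" "\<forall>x\<in>S. f (f (f x)) = x" "\<forall>x\<in>S. f x \<noteq> x"
  shows "3 dvd card S"
  using assms
proof (induction "card S" arbitrary: S rule: less_induct)
  case less
  show ?case
  proof (cases "S = {}")
    case True then show ?thesis by simp
  next
    case False
    then obtain x where x: "x \<in> S" by auto
    define Orb where "Orb = {x, f x, f (f x)}"
    have fx: "f x \<in> S" "f (f x) \<in> S" using less.prems x by auto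
    have d1: "f x \<noteq> x" using less.prems x by auto
    have d2: "f (f x) \<noteq> f x" using less.prems fx by auto
    have d3: "f (f x) \<noteq> x"
    proof
      assume "f (f x) = x"
      then have "f (f (f x)) = f x" by simp
      then show False using less.prems x d1 by auto
    qed
    have cO: "card Orb = 3" using d1 d2 d3 by (simp add: Orb_def)
    have OS: "Orb \<subseteq> S" using x fx by (auto simp: Orb_def)
    have cl: "\<forall>y\<in>S - Orb. f y \<in> S - Orb"
    proof
      fix y assume y: "y \<in> S - Orb"
      have yy: "f (f (f y)) = y" using less.prems y by auto
      have "f y \<notin> Orb"
      proof
        assume "f y \<in> Orb"
        then have "f y = x \<or> f y = f x \<or> f y = f (f x)" by (auto simp: Orb_def)
        then have "y = f (f x) \<or> y = x \<or> y = f x"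
        proof (elim disjE)
          assume "f y = x" then show ?thesis using yy by auto
        next
          assume "f y = f x" then have "f (f (f y)) = f (f (f x))" by simp
          then show ?thesis using yy less.prems x by auto
        next
          assume "f y = f (f x)" then have "f (f (f y)) = f (f (f (f x)))" by simp
          then show ?thesis using yy less.prems x by auto
        qed
        then show False using y by (auto simp: Orb_def)
      qed
      then show "f y \<in> S - Orb" using less.prems y by auto
    qed
    have cS: "card S = card (S - Orb) + 3"
      using card_Diff_subset[OF finite_subset[OF OS less.prems(1)] OS] card_mono[OF less.prems(1) OS] cO
      by simp
    have "3 dvd card (S - Orb)"
      by (rule less.hyps) (use cS less.prems cl in auto)
    then show ?thesis using cS by simp
  qed
qed

lemma vscale_vscale: "vscale s (vscale t c) = vscale (s * t) c"
  by (simp add: vscale_def mult.assoc)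

lemma O4_mult: "O4 * (a::f4) = a"
  by (cases a) simp_all

lemma vscale_one: "vscale 1 c = c"
  by (simp add: vscale_def O4_mult)

lemma W4_cube: "W4 * (W4 * W4) = (1::f4)"
  by simp

lemma nonzero_vec: "c \<noteq> replicate (length c) 0 \<Longrightarrow> \<exists>k<length c. c!k \<noteq> 0"
  by (metis in_set_conv_nth replicate_eqI)

lemma vscale_W4_ne: "c \<noteq> replicate (length c) 0 \<Longrightarrow> vscale W4 c \<noteq> c"
proof
  assume "c \<noteq> replicate (length c) 0" "vscale W4 c = c"
  then obtain k where k: "k < length c" "c!k \<noteq> 0" using nonzero_vec by blast
  then have "W4 * c!k = c!k" using \<open>vscale W4 c = c\<close> by (metis vscale_nth)
  then show False using k by (cases "c!k") simp_all
qed

lemma nz_mult_f4: "(s::f4) \<noteq> Z4 \<Longrightarrow> (s * a = Z4) = (a = Z4)"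
  by (cases s; cases a) simp_all

lemma wt_vscale: "s \<noteq> 0 \<Longrightarrow> wt (vscale s c) = wt c"
  unfolding wt_def by (rule arg_cong[where f=card]) (auto simp: vscale_nth nz_mult_f4)

lemma wp_vscale: "s \<noteq> 0 \<Longrightarrow> wp p (vscale s c) = wp p c"
  unfolding wp_def by (rule arg_cong[where f=card]) (auto simp: vscale_nth nz_mult_f4)

lemma three_dvd_class:
  assumes sd: "herm_self_dual n D"
    and inv: "\<And>c. c \<in> D \<Longrightarrow> Q (vscale W4 c) = Q c"
  shows "3 dvd card {c\<in>D. c \<noteq> replicate n 0 \<and> Q c}"
proof (rule card_orbit3[where f="vscale W4"])
  note f = sd_facts[OF sd]
  have len: "\<And>c. c \<in> D \<Longrightarrow> length c = n" using f(1) by (auto simp: vec_space_def)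
  show "finite {c\<in>D. c \<noteq> replicate n 0 \<and> Q c}" using f(6) by simp
  show "\<forall>x\<in>{c\<in>D. c \<noteq> replicate n 0 \<and> Q c}. vscale W4 x \<in> {c\<in>D. c \<noteq> replicate n 0 \<and> Q c}"
  proof
    fix x assume x: "x \<in> {c\<in>D. c \<noteq> replicate n 0 \<and> Q c}"
    have "vscale W4 x \<noteq> replicate n 0"
    proof
      assume "vscale W4 x = replicate n 0"
      then have "vscale V4 (vscale W4 x) = replicate n 0" by (simp add: vscale_def)
      then have "x = replicate n 0" by (simp add: vscale_vscale vscale_one[unfolded f4_simps])
      then show False using x by simp
    qed
    then show "vscale W4 x \<in> {c\<in>D. c \<noteq> replicate n 0 \<and> Q c}" using x f(4) inv by auto
  qed
  show "\<forall>x\<in>{c\<in>D. c \<noteq> replicate n 0 \<and> Q c}. vscale W4 (vscale W4 (vscale W4 x)) = x"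
    by (simp add: vscale_vscale vscale_one[unfolded f4_simps])
  show "\<forall>x\<in>{c\<in>D. c \<noteq> replicate n 0 \<and> Q c}. vscale W4 x \<noteq> x"
    using vscale_W4_ne len by auto
qed

lemma sum_by_value:
  assumes "finite S" "\<And>c. c \<in> S \<Longrightarrow> f c \<le> (N::nat)"
  shows "(\<Sum>c\<in>S. F (f c)) = (\<Sum>w\<le>N. of_nat (card {c\<in>S. f c = w}) * (F w :: 'a::comm_semiring_1))"
proof -
  have "(\<Sum>c\<in>S. F (f c)) = (\<Sum>w\<in>{..N}. \<Sum>c\<in>{c. c \<in> S \<and> f c = w}. F (f c))"
    by (rule sum.group[symmetric]) (use assms in auto)
  also have "\<dots> = (\<Sum>w\<le>N. of_nat (card {c\<in>S. f c = w}) * F w)"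
    by (rule sum.cong) auto
  finally show ?thesis .
qed

lemma wp_le: "p < length c \<Longrightarrow> wp p c \<le> length c - 1"
proof -
  assume p: "p < length c"
  have "{k. k < length c \<and> k \<noteq> p \<and> c ! k \<noteq> 0} \<subseteq> {..<length c} - {p}" by auto
  then have "wp p c \<le> card ({..<length c} - {p})" unfolding wp_def by (intro card_mono) auto
  then show ?thesis using p by simp
qed

lemma wt_split: "p < length c \<Longrightarrow> wt c = wp p c + (if c!p = 0 then 0 else 1)"
proof -
  assume p: "p < length c"
  have "{k. k < length c \<and> c ! k \<noteq> 0} = {k. k < length c \<and> k \<noteq> p \<and> c ! k \<noteq> 0} \<union> (if c!p = 0 then {} else {p})"
    using p by auto
  then show ?thesis unfolding wt_def wp_def by (simp add: card_insert_if)
qed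

lemma zero_of_wp:
  assumes "p < length c" "c!p = 0" "wp p c = 0"
  shows "c = replicate (length c) 0"
proof -
  have "{k. k < length c \<and> k \<noteq> p \<and> c ! k \<noteq> 0} = {}"
    using assms(3) unfolding wp_def by (simp add: card_eq_0_iff)
  then have "\<forall>k<length c. c!k = 0" using assms(2) by auto
  then show ?thesis by (simp add: list_eq_iff_nth_eq)
qed

lemma wp_zero [simp]: "wp p (replicate n Z4) = 0"
  by (simp add: wp_def)

lemma card_D:
  assumes sd: "herm_self_dual n D" and p: "p < n"
  shows "card D ^ 2 = 4 ^ n"
proof -
  note f = sd_facts[OF sd]
  have len: "\<And>c. c \<in> D \<Longrightarrow> length c = n" using f(1) by (auto simp: vec_space_def)
  have "poly (of_nat (card D) * (\<Sum>u\<in>D. XX ^ wp p u)) 1 = int (card D) * int (card D)"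
    by (simp add: poly_sum)
  moreover have "poly (\<Sum>c\<in>D. if c!p = 0 then 4 * (1 + 3*XX)^(n - 1 - wp p c) * (1 - XX)^(wp p c) else 0) 1
       = (\<Sum>c\<in>D. if c = replicate n 0 then 4 ^ n else 0)"
  proof -
    have "poly (\<Sum>c\<in>D. if c!p = 0 then 4 * (1 + 3*XX)^(n - 1 - wp p c) * (1 - XX)^(wp p c) else 0) 1
       = (\<Sum>c\<in>D. if c!p = 0 then 4 * 4^(n - 1 - wp p c) * 0^(wp p c) else 0)"
      unfolding poly_sum by (rule sum.cong) (auto simp: numeral_poly)
    also have "\<dots> = (\<Sum>c\<in>D. if c = replicate n 0 then 4 ^ n else (0::int))"
    proof (rule sum.cong[OF refl])
      fix c assume c: "c \<in> D"
      show "(if c!p = 0 then 4 * 4^(n - 1 - wp p c) * 0^(wp p c) else 0) = (if c = replicate n 0 then 4 ^ n else (0::int))"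
      proof (cases "c = replicate n 0")
        case True
        have "(4::int) * 4^(n - 1) = 4 ^ n" using p by (cases n) simp_all
        then show ?thesis using True p by simp
      next
        case False
        then have "\<not> (c!p = 0 \<and> wp p c = 0)" using zero_of_wp[of p c] len[OF c] p by auto
        then show ?thesis using False by auto
      qed
    qed
    finally show ?thesis .
  qed
  ultimately have "int (card D) * int (card D) = (\<Sum>c\<in>D. if c = replicate n 0 then 4 ^ n else 0)"
    using macwilliams[OF sd p] by simp
  also have "\<dots> = 4 ^ n" using f(2,6) by (simp add: sum.delta)
  finally have "int (card D ^ 2) = int (4 ^ n)" by (simp add: power2_eq_square)
  then show ?thesis by (simp only: of_nat_eq_iff)
qed


datatype f3 = E0 | E1 | E2

instantiation f3 :: field
begin

definition zero_f3 :: f3 where "zero_f3 = E0"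
definition one_f3 :: f3 where "one_f3 = E1"

fun plus_f3 :: "f3 \<Rightarrow> f3 \<Rightarrow> f3" where
  "plus_f3 E0 y = y"
| "plus_f3 x E0 = x"
| "plus_f3 E1 E1 = E2" | "plus_f3 E1 E2 = E0"
| "plus_f3 E2 E1 = E0" | "plus_f3 E2 E2 = E1"

fun uminus_f3 :: "f3 \<Rightarrow> f3" where
  "uminus_f3 E0 = E0" | "uminus_f3 E1 = E2" | "uminus_f3 E2 = E1"

definition minus_f3 :: "f3 \<Rightarrow> f3 \<Rightarrow> f3" where "minus_f3 x y = x + (- y)"

fun times_f3 :: "f3 \<Rightarrow> f3 \<Rightarrow> f3" where
  "times_f3 E0 y = E0"
| "times_f3 x E0 = E0"
| "times_f3 E1 y = y"
| "times_f3 x E1 = x"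
| "times_f3 E2 E2 = E1"

fun inverse_f3 :: "f3 \<Rightarrow> f3" where
  "inverse_f3 E0 = E0" | "inverse_f3 E1 = E1" | "inverse_f3 E2 = E2"

definition divide_f3 :: "f3 \<Rightarrow> f3 \<Rightarrow> f3" where "divide_f3 x y = x * inverse y"

instance
proof (standard, goal_cases)
  case (1 a b c) then show ?case by (cases a; cases b; cases c) (simp_all add: zero_f3_def one_f3_def minus_f3_def divide_f3_def)
next case (2 a b) then show ?case by (cases a; cases b) (simp_all add: zero_f3_def one_f3_def minus_f3_def divide_f3_def)
next case (3 a) then show ?case by (cases a) (simp_all add: zero_f3_def one_f3_def minus_f3_def divide_f3_def)
next case (4 a b c) then show ?case by (cases a; cases b; cases c) (simp_all add: zero_f3_def one_f3_def minus_f3_def divide_f3_def)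
next case (5 a b) then show ?case by (cases a; cases b) (simp_all add: zero_f3_def one_f3_def minus_f3_def divide_f3_def)
next case (6 a) then show ?case by (cases a) (simp_all add: zero_f3_def one_f3_def minus_f3_def divide_f3_def)
next case (7 a) then show ?case by (cases a) (simp_all add: zero_f3_def one_f3_def minus_f3_def divide_f3_def)
next case (8 a b) then show ?case by (cases a; cases b) (simp_all add: zero_f3_def one_f3_def minus_f3_def divide_f3_def)
next case (9 a b c) then show ?case by (cases a; cases b; cases c) (simp_all add: zero_f3_def one_f3_def minus_f3_def divide_f3_def)
next case 10 then show ?case by (simp_all add: zero_f3_def one_f3_def minus_f3_def divide_f3_def)
next case (11 a) then show ?case by (cases a) (simp_all add: zero_f3_def one_f3_def minus_f3_def divide_f3_def)
next case (12 a b) then show ?case by (cases a; cases b) (simp_all add: zero_f3_def one_f3_def minus_f3_def divide_f3_def)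
next case 13 then show ?case by (simp_all add: zero_f3_def one_f3_def minus_f3_def divide_f3_def)
qed

end

instantiation f3 ::
  "{unique_euclidean_ring, normalization_euclidean_semiring, normalization_semidom_multiplicative}"
begin

definition [simp]: "normalize_f3 = (normalize_field :: f3 \<Rightarrow> _)"
definition [simp]: "unit_factor_f3 = (unit_factor_field :: f3 \<Rightarrow> _)"
definition [simp]: "modulo_f3 = (mod_field :: f3 \<Rightarrow> _)"
definition [simp]: "euclidean_size_f3 = (euclidean_size_field :: f3 \<Rightarrow> _)"
definition [simp]: "division_segment (x :: f3) = 1"

instance
  by standard
    (simp_all add: dvd_field_iff field_split_simps split: if_splits)

end

instantiation f3 :: euclidean_ring_gcd
begin

definition gcd_f3 :: "f3 \<Rightarrow> f3 \<Rightarrow> f3" where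
  "gcd_f3 = Euclidean_Algorithm.gcd"
definition lcm_f3 :: "f3 \<Rightarrow> f3 \<Rightarrow> f3" where
  "lcm_f3 = Euclidean_Algorithm.lcm"
definition Gcd_f3 :: "f3 set \<Rightarrow> f3" where
 "Gcd_f3 = Euclidean_Algorithm.Gcd"
definition Lcm_f3 :: "f3 set \<Rightarrow> f3" where
 "Lcm_f3 = Euclidean_Algorithm.Lcm"

instance by standard (simp_all add: gcd_f3_def lcm_f3_def Gcd_f3_def Lcm_f3_def)

end

instance f3 :: field_gcd ..

lemma of_nat_f3: "(of_nat k :: f3) = (if k mod 3 = 0 then E0 else if k mod 3 = 1 then E1 else E2)"
proof (induction k)
  case 0 then show ?case by (simp add: zero_f3_def)
next
  case (Suc k)
  then show ?case by (auto simp: one_f3_def zero_f3_def mod_Suc)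
qed

lemma three_f3: "(3::f3) = 0"
  using of_nat_f3[of 3] by (simp add: zero_f3_def)

lemma two_f3: "(2::f3) = E2"
  using of_nat_f3[of 2] by simp

lemma of_int_f3_zero:
  assumes "(of_int b :: f3) = 0" shows "3 dvd b"
proof -
  have "b = 3 * (b div 3) + b mod 3" by simp
  then have "(of_int b :: f3) = of_int 3 * of_int (b div 3) + of_int (b mod 3)"
    by (metis of_int_add of_int_mult)
  also have "(of_int 3 :: f3) = 0" using three_f3 by simp
  finally have "(of_int (b mod 3) :: f3) = 0" using assms by simp
  moreover have "b mod 3 = int (nat (b mod 3))" by simp
  moreover have "nat (b mod 3) < 3" by simp
  ultimately have "(of_nat (nat (b mod 3)) :: f3) = 0" by (metis of_int_of_nat_eq)
  then have "nat (b mod 3) mod 3 = 0" by (simp add: of_nat_f3 zero_f3_def split: if_splits)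
  then have "b mod 3 = 0" using \<open>nat (b mod 3) < 3\<close> by simp
  then show ?thesis by presburger
qed

definition psi :: "int poly \<Rightarrow> f3 poly" where "psi p = map_poly of_int p"

lemma coeff_psi: "coeff (psi p) i = of_int (coeff p i)"
  by (simp add: psi_def coeff_map_poly)

lemma psi_add: "psi (p + q) = psi p + psi q"
  by (simp add: poly_eq_iff coeff_psi)

lemma psi_diff: "psi (p - q) = psi p - psi q"
  by (simp add: poly_eq_iff coeff_psi)

lemma psi_uminus: "psi (- p) = - psi p"
  by (simp add: poly_eq_iff coeff_psi)

lemma psi_mult: "psi (p * q) = psi p * psi q"
  by (simp add: poly_eq_iff coeff_psi coeff_mult)

lemma psi_const: "psi [:c:] = [:of_int c:]"
  by (simp add: poly_eq_iff coeff_psi coeff_pCons split: nat.splits)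

lemma psi_one: "psi 1 = 1"
  using psi_const[of 1] by (simp add: one_pCons)

lemma psi_X: "psi [:0,1:] = [:0,1:]"
  by (simp add: poly_eq_iff coeff_psi coeff_pCons split: nat.splits)

lemma psi_of_nat: "psi (of_nat k) = of_nat k"
  by (simp add: of_nat_poly psi_const)

lemma psi_of_int: "psi (of_int k) = of_int k"
  by (simp add: of_int_poly psi_const)

lemma psi_numeral: "psi (numeral k) = numeral k"
  using psi_of_nat[of "numeral k"] by simp

lemma psi_power: "psi (p ^ k) = psi p ^ k"
  by (induction k) (simp_all add: psi_one psi_mult)

lemma psi_sum: "psi (\<Sum>i\<in>A. f i) = (\<Sum>i\<in>A. psi (f i))"
  by (induction A rule: infinite_finite_induct) (simp_all add: psi_add, simp_all add: psi_def)

lemma psi_monom: "psi (monom c k) = monom (of_int c) k"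
  by (simp add: psi_def map_poly_monom)

lemma psi_smult: "psi (smult c p) = smult (of_int c) (psi p)"
  by (simp add: poly_eq_iff coeff_psi)


abbreviation YY :: "f3 poly" where "YY \<equiv> [:0,1:]"

lemma pcompose_power_left: "pcompose (p ^ k) q = (pcompose p q) ^ k"
  by (induction k) (simp_all add: pcompose_mult pcompose_1)

lemma lin_coprime:
  assumes "a \<noteq> b"
  shows "coprime [:a,1::f3:] [:b,1:]"
proof (rule coprimeI)
  fix c assume "c dvd [:a,1::f3:]" "c dvd [:b,1:]"
  then have "c dvd [:a,1:] - [:b,1:]" by (rule dvd_diff)
  also have "[:a,1::f3:] - [:b,1:] = [:a - b:]" by simp
  finally have "c dvd [:a - b:]" .
  moreover have "is_unit [:a - b:]" using assms by (simp add: is_unit_const_poly_iff dvd_field_iff)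
  ultimately show "is_unit c" using dvd_unit_imp_unit by blast
qed

lemma even_compose:
  fixes R :: "f3 poly"
  assumes "\<forall>k. odd k \<longrightarrow> coeff R k = 0"
  shows "pcompose R [:0,-1:] = R"
proof (rule poly_eqI)
  fix n show "coeff (pcompose R [:0,-1:]) n = coeff R n"
    by (cases "even n") (simp_all add: coeff_pcompose_linear assms)
qed

lemma odd_compose:
  fixes M :: "f3 poly"
  assumes "\<forall>k. even k \<longrightarrow> coeff M k = 0"
  shows "pcompose M [:0,-1:] = - M"
proof (rule poly_eqI)
  fix n show "coeff (pcompose M [:0,-1:]) n = coeff (- M) n"
    by (cases "even n") (simp_all add: coeff_pcompose_linear assms)
qed

lemma f3_main:
  fixes R M P :: "f3 poly" and m :: nat
  assumes E: "R + M = 1 - YY + pcompose R [:1,-1:]"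
    and ev: "\<forall>k. odd k \<longrightarrow> coeff R k = 0"
    and od: "\<forall>k. even k \<longrightarrow> coeff M k = 0"
    and Pdef: "P = R + YY * M"
    and deg: "degree R \<le> 6*m - 2"
    and low: "\<forall>k<2*m. coeff P k = 0"
    and m: "m > 0"
  shows "P = 0"
proof -
  define A1 where "A1 = pcompose R [:1,1:]"
  define A2 where "A2 = pcompose R [:1,-1:]"
  have Rs: "pcompose R [:0,-1:] = R" by (rule even_compose[OF ev])
  have Ms: "pcompose M [:0,-1:] = - M" by (rule odd_compose[OF od])
  have "pcompose (R + M) [:0,-1:] = pcompose (1 - YY + A2) [:0,-1:]" using E by (simp add: A2_def)
  moreover have "pcompose A2 [:0,-1:] = A1"
    unfolding A2_def A1_def by (simp add: pcompose_assoc[symmetric] pcompose_pCons pcompose_1)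
  ultimately have E2: "R - M = 1 + YY + A1"
    by (simp add: pcompose_add pcompose_diff Rs Ms pcompose_pCons pcompose_1)
  have A2q: "pcompose A2 [:1,1:] = R"
    unfolding A2_def by (simp add: pcompose_assoc[symmetric] pcompose_pCons pcompose_1 Rs)
  have Mq: "pcompose M [:1,1:] = - YY + R - A1"
  proof -
    have "M = 1 - YY + A2 - R" using E by (simp add: A2_def algebra_simps)
    then have "pcompose M [:1,1:] = pcompose (1 - YY + A2 - R) [:1,1:]" by simp
    also have "\<dots> = - YY + R - A1"
      by (simp add: pcompose_add pcompose_diff A2q A1_def pcompose_pCons pcompose_1 one_pCons)
    finally show ?thesis .
  qed
  have Pq: "pcompose P [:1,1:] = P"
  proof -
    have "pcompose P [:1,1:] = A1 + [:1,1:] * (- YY + R - A1)"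
      by (simp add: Pdef pcompose_add pcompose_mult Mq A1_def pcompose_pCons pcompose_1)
    also have "\<dots> = P"
    proof -
      have M': "M = R - 1 - YY - A1" using E2 by (simp add: algebra_simps)
      show ?thesis unfolding Pdef M' by (simp add: algebra_simps)
    qed
    finally show ?thesis .
  qed
  have Pq2: "pcompose P [:2,1:] = P"
  proof -
    have "pcompose P [:2,1:] = pcompose (pcompose P [:1,1:]) [:1,1:]"
      by (simp add: pcompose_assoc[symmetric] pcompose_pCons pcompose_1)
    then show ?thesis using Pq by simp
  qed
  have "monom 1 (2*m) dvd P" using low by (simp add: monom_1_dvd_iff')
  then obtain Q where Q: "P = YY^(2*m) * Q" by (auto simp: monom_altdef)
  have d0: "[:0,1:]^(2*m) dvd P" using Q by simp
  have d1: "[:1,1:]^(2*m) dvd P"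
  proof -
    have "P = pcompose (YY^(2*m) * Q) [:1,1:]" using Pq Q by simp
    also have "\<dots> = [:1,1:]^(2*m) * pcompose Q [:1,1:]"
      by (simp add: pcompose_mult pcompose_power_left pcompose_pCons pcompose_1)
    finally show ?thesis by (metis dvd_triv_left)
  qed
  have d2: "[:2,1:]^(2*m) dvd P"
  proof -
    have "P = pcompose (YY^(2*m) * Q) [:2,1:]" using Pq2 Q by simp
    also have "\<dots> = [:2,1:]^(2*m) * pcompose Q [:2,1:]"
      by (simp add: pcompose_mult pcompose_power_left pcompose_pCons pcompose_1)
    finally show ?thesis by (metis dvd_triv_left)
  qed
  have c01: "coprime ([:0,1::f3:]^(2*m)) ([:1,1:]^(2*m))"
    using lin_coprime[of 0 1] by (simp add: zero_f3_def one_f3_def two_f3)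
  have c02: "coprime ([:0,1::f3:]^(2*m)) ([:2,1:]^(2*m))"
    using lin_coprime[of 0 2] by (simp add: zero_f3_def one_f3_def two_f3)
  have c12: "coprime ([:1,1::f3:]^(2*m)) ([:2,1:]^(2*m))"
    using lin_coprime[of 1 2] by (simp add: zero_f3_def one_f3_def two_f3)
  have d01: "[:0,1:]^(2*m) * [:1,1:]^(2*m) dvd P" by (rule divides_mult[OF d0 d1 c01])
  have "([:0,1:]^(2*m) * [:1,1:]^(2*m)) * [:2,1:]^(2*m) dvd P"
    by (rule divides_mult[OF d01 d2]) (subst coprime_mult_left_iff, rule conjI[OF c02 c12])
  moreover have "degree (([:0,1::f3:]^(2*m) * [:1,1:]^(2*m)) * [:2,1:]^(2*m)) = 6*m"
    by (simp add: degree_mult_eq degree_linear_power)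
  moreover have "degree P \<le> 6*m - 1"
  proof -
    have M': "M = 1 - YY + A2 - R" using E by (simp add: A2_def algebra_simps)
    have dA2: "degree A2 = degree R" unfolding A2_def by (simp add: degree_pcompose)
    have "degree (1 - YY + A2) \<le> max (degree (1 - YY)) (degree A2)" by (rule degree_add_le_max)
    moreover have "degree (1 - YY) \<le> 1" by (simp add: degree_diff_le)
    ultimately have "degree (1 - YY + A2) \<le> 6*m - 2" using dA2 deg m by linarith
    then have dM: "degree M \<le> 6*m - 2" unfolding M' using deg degree_diff_le by blast
    have "degree (YY * M) \<le> 6*m - 1"
      using degree_mult_le[of YY M] dM m by simp
    moreover have "degree R \<le> 6*m - 1" using deg by linarith
    ultimately show ?thesis unfolding Pdef by (intro degree_add_le)
  qed
  ultimately show "P = 0"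
  proof -
    assume a: "([:0,1:]^(2*m) * [:1,1:]^(2*m)) * [:2,1:]^(2*m) dvd P"
      "degree (([:0,1::f3:]^(2*m) * [:1,1:]^(2*m)) * [:2,1:]^(2*m)) = 6*m"
      "degree P \<le> 6*m - 1"
    show "P = 0"
    proof (rule ccontr)
      assume "P \<noteq> 0"
      then have "6*m \<le> degree P" using dvd_imp_degree_le[OF a(1)] a(2) by simp
      then show False using a(3) m by linarith
    qed
  qed
qed


lemma X_pow_monom: "([:0,1:] :: 'a::comm_semiring_1 poly) ^ w = monom 1 w"
  by (simp add: monom_altdef)

lemma coeff_sum_smult_X:
  "coeff (\<Sum>w\<le>N. smult (a w) ([:0,1:]^w)) k = (if k \<le> N then (a k :: 'a::comm_semiring_1) else 0)"
proof -
  have "coeff (\<Sum>w\<le>N. smult (a w) ([:0,1:]^w)) k = (\<Sum>w\<le>N. if w = k then a w else 0)"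
    by (simp add: coeff_sum X_pow_monom coeff_monom if_distrib cong: if_cong)
  also have "\<dots> = (if k \<le> N then a k else 0)" by (simp add: sum.delta')
  finally show ?thesis .
qed

lemma pow64: "\<exists>K. (64::int)^m = 1 + 9*K"
proof (induction m)
  case 0 then show ?case by (intro exI[of _ 0]) simp
next
  case (Suc m)
  then obtain K where "(64::int)^m = 1 + 9*K" by blast
  then have "(64::int)^Suc m = 1 + 9*(7 + 64*K)" by simp
  then show ?case by blast
qed

lemma pow13: "(9::int poly) dvd ((1 + 3*XX)^j - 1 - of_nat (3*j) * XX)"
proof (induction j)
  case 0 then show ?case by simp
next
  case (Suc j)
  then obtain E where E: "(1 + 3*XX)^j - 1 - of_nat (3*j) * XX = 9 * E" by (auto elim: dvdE)
  have "(1 + 3*XX)^Suc j - 1 - of_nat (3 * Suc j) * XX = 9 * (E * (1 + 3*XX) + of_nat j * XX * XX)"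
  proof -
    have "(1 + 3*XX)^j = 9 * E + 1 + of_nat (3*j) * XX" using E by (simp add: algebra_simps)
    then show ?thesis by (simp add: algebra_simps)
  qed
  then show ?case by (metis dvd_triv_left)
qed

lemma pow13': "(3::int poly) dvd ((1 + 3*XX)^j - 1)"
proof -
  obtain E where E: "(1 + 3*XX)^j - 1 - of_nat (3*j) * XX = 9 * E" using pow13[of j] by (auto elim: dvdE)
  then have "(1 + 3*XX)^j - 1 = 3 * (3 * E + of_nat j * XX)" by (simp add: algebra_simps)
  then show ?thesis by (metis dvd_triv_left)
qed

lemma ring_id:
  fixes a bb c e t k x rc :: "'a::comm_ring_1"
  assumes "c * (1 + 3*a + 3*bb) = 4*e + 4*t"
  shows "3*(a + bb - 1 - 4*k*x - 4*rc) = 4*(e - 1 - 3*k*x) + 4*(t - 3*rc) - (c - 1)*(1 + 3*a + 3*bb)"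
proof -
  have "4*(e - 1 - 3*k*x) + 4*(t - 3*rc) - (c - 1)*(1 + 3*a + 3*bb)
      = (4*e + 4*t) - c * (1 + 3*a + 3*bb) + 3*(a + bb - 1 - 4*k*x - 4*rc)"
    by (simp add: algebra_simps)
  then show ?thesis using assms by simp
qed

lemma wt_zero [simp]: "wt (replicate n Z4) = 0"
proof -
  have "{k. k < n \<and> replicate n Z4 ! k \<noteq> Z4} = {}" by auto
  then show ?thesis by (simp add: wt_def)
qed

lemma wt_le: "wt c \<le> length c"
proof -
  have "{k. k < length c \<and> c ! k \<noteq> 0} \<subseteq> {..<length c}" by auto
  then show ?thesis unfolding wt_def using card_mono[of "{..<length c}"] by fastforce
qed


lemma main_lemma:
  fixes m :: nat and D :: "f4 list set"
  assumes sd: "herm_self_dual (6*m) D" and m: "m > 0"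
    and mw: "\<And>c. c \<in> D \<Longrightarrow> c \<noteq> replicate (6*m) 0 \<Longrightarrow> 2*m \<le> wt c"
    and w: "0 < w" "w \<le> 6*m"
  shows "9 dvd card {c\<in>D. wt c = w}"
proof -
  define n where "n = 6*m"
  define z where "z = replicate n (0::f4)"
  have n0: "0 < n" using m by (simp add: n_def)
  note f = sd_facts[OF sd, folded n_def]
  have len: "\<And>c. c \<in> D \<Longrightarrow> length c = n" using f(1) by (auto simp: vec_space_def)
  have zD: "z \<in> D" using f(2) by (simp add: z_def)
  have finD: "finite D" by (rule f(6))
  define k0 where "k0 w = card {c\<in>D. c \<noteq> replicate n 0 \<and> (c!0 = Z4 \<and> wp 0 c = w)}" for w
  define k1 where "k1 w = card {c\<in>D. c \<noteq> replicate n 0 \<and> (c!0 \<noteq> Z4 \<and> wp 0 c = w)}" for w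
  define ka where "ka w = card {c\<in>D. c \<noteq> replicate n 0 \<and> wt c = w}" for w
  have inv0: "(vscale W4 c) ! 0 = W4 * c ! 0" if "c \<in> D" for c
    using len[OF that] n0 by (simp add: vscale_nth)
  have W4nz: "W4 \<noteq> 0" by simp
  have d0: "3 dvd k0 w" for w unfolding k0_def
    by (rule three_dvd_class[OF sd[folded n_def]])
       (simp add: inv0 wp_vscale[OF W4nz] nz_mult_f4)
  have d1: "3 dvd k1 w" for w unfolding k1_def
    by (rule three_dvd_class[OF sd[folded n_def]])
       (simp add: inv0 wp_vscale[OF W4nz] nz_mult_f4)
  have da: "3 dvd ka w" for w unfolding ka_def
    by (rule three_dvd_class[OF sd[folded n_def]])
       (simp add: wt_vscale[OF W4nz])
  define r where "r w = k0 w div 3" for w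
  define mm where "mm w = k1 w div 3" for w
  define b where "b w = ka w div 3" for w
  have k0r: "k0 w = 3 * r w" for w using d0 by (simp add: r_def)
  have k1m: "k1 w = 3 * mm w" for w using d1 by (simp add: mm_def)
  have kab: "ka w = 3 * b w" for w using da by (simp add: b_def)
  define Rh where "Rh = (\<Sum>w\<le>n. smult (int (r w)) (XX^w))"
  define Mh where "Mh = (\<Sum>w\<le>n. smult (int (mm w)) (XX^w))"
  define Ph where "Ph = (\<Sum>w\<le>n. smult (int (b w)) (XX^w))"
  define Rc where "Rc = (\<Sum>w\<le>n. smult (int (r w)) ((1 - XX)^w))"
  define S0 where "S0 = {c\<in>D. c \<noteq> z \<and> c!0 = Z4}"
  define S1 where "S1 = {c\<in>D. c \<noteq> z \<and> c!0 \<noteq> Z4}"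
  have Dsplit: "D = insert z (S0 \<union> S1)" using zD by (auto simp: S0_def S1_def)
  have finS: "finite S0" "finite S1" using finD by (auto simp: S0_def S1_def)
  have zS: "z \<notin> S0 \<union> S1" by (auto simp: S0_def S1_def)
  have disj: "S0 \<inter> S1 = {}" by (auto simp: S0_def S1_def)
  have wple: "wp 0 c \<le> n" if "c \<in> D" for c
    using wp_le[of 0 c] len[OF that] n0 by simp
  have S0k: "{c\<in>S0. wp 0 c = w} = {c\<in>D. c \<noteq> replicate n 0 \<and> (c!0 = Z4 \<and> wp 0 c = w)}" for w
    by (auto simp: S0_def z_def)
  have S1k: "{c\<in>S1. wp 0 c = w} = {c\<in>D. c \<noteq> replicate n 0 \<and> (c!0 \<noteq> Z4 \<and> wp 0 c = w)}" for w
    by (auto simp: S1_def z_def)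
  have sumS0: "(\<Sum>c\<in>S0. F (wp 0 c)) = (\<Sum>w\<le>n. of_nat (k0 w) * (F w :: int poly))" for F
    unfolding k0_def S0k[symmetric] by (rule sum_by_value) (use finS wple in \<open>auto simp: S0_def\<close>)
  have sumS1: "(\<Sum>c\<in>S1. F (wp 0 c)) = (\<Sum>w\<le>n. of_nat (k1 w) * (F w :: int poly))" for F
    unfolding k1_def S1k[symmetric] by (rule sum_by_value) (use finS wple in \<open>auto simp: S1_def\<close>)
  have sm: "(\<Sum>w\<le>n. of_nat (3 * a w) * XX^w) = 3 * (\<Sum>w\<le>n. smult (int (a w)) (XX^w))" for a
    by (simp add: sum_distrib_left of_nat_poly numeral_poly mult.commute)
  have A: "(\<Sum>u\<in>D. XX ^ wp 0 u) = 1 + 3*Rh + 3*Mh"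
  proof -
    have "(\<Sum>u\<in>D. XX ^ wp 0 u) = XX ^ wp 0 z + ((\<Sum>u\<in>S0. XX ^ wp 0 u) + (\<Sum>u\<in>S1. XX ^ wp 0 u))"
      unfolding Dsplit using finS zS disj by (simp add: sum.union_disjoint)
    also have "(\<Sum>u\<in>S0. XX ^ wp 0 u) = 3 * Rh" unfolding sumS0 k0r Rh_def by (rule sm)
    also have "(\<Sum>u\<in>S1. XX ^ wp 0 u) = 3 * Mh" unfolding sumS1 k1m Mh_def by (rule sm)
    finally show ?thesis by (simp add: z_def)
  qed
  define T where "T = (\<Sum>w\<le>n. of_nat (k0 w) * ((1 + 3*XX)^(n - 1 - w) * (1 - XX)^w))"
  have B: "(\<Sum>c\<in>D. if c!0 = 0 then 4 * (1 + 3*XX)^(n - 1 - wp 0 c) * (1 - XX)^(wp 0 c) else 0)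
      = 4 * (1 + 3*XX)^(n - 1) + 4 * T"
  proof -
    let ?F = "\<lambda>c. if c!0 = 0 then 4 * (1 + 3*XX)^(n - 1 - wp 0 c) * (1 - XX)^(wp 0 c) else (0::int poly)"
    have "(\<Sum>c\<in>D. ?F c) = ?F z + ((\<Sum>c\<in>S0. ?F c) + (\<Sum>c\<in>S1. ?F c))"
      unfolding Dsplit using finS zS disj by (simp add: sum.union_disjoint)
    also have "?F z = 4 * (1 + 3*XX)^(n - 1)" using n0 by (simp add: z_def)
    also have "(\<Sum>c\<in>S1. ?F c) = 0" by (rule sum.neutral) (auto simp: S1_def)
    also have "(\<Sum>c\<in>S0. ?F c) = (\<Sum>c\<in>S0. 4 * ((1 + 3*XX)^(n - 1 - wp 0 c) * (1 - XX)^(wp 0 c)))"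
      by (rule sum.cong) (auto simp: S0_def)
    also have "\<dots> = (\<Sum>w\<le>n. of_nat (k0 w) * (4 * ((1 + 3*XX)^(n - 1 - w) * (1 - XX)^w)))"
      by (rule sumS0)
    also have "\<dots> = 4 * T" unfolding T_def by (simp add: sum_distrib_left mult.left_commute)
    finally show ?thesis by simp
  qed
  have wtle: "wt c \<le> n" if "c \<in> D" for c using wt_le[of c] len[OF that] by simp
  have C1: "(\<Sum>c\<in>D. XX ^ wt c) = 1 + 3 * Ph"
  proof -
    have "(\<Sum>c\<in>D. XX ^ wt c) = XX ^ wt z + (\<Sum>c\<in>D - {z}. XX ^ wt c)"
      using finD zD by (simp add: sum.remove)
    also have "XX ^ wt z = 1" by (simp add: z_def)
    also have "(\<Sum>c\<in>D - {z}. XX ^ wt c) = (\<Sum>w\<le>n. of_nat (card {c\<in>D - {z}. wt c = w}) * XX ^ w)"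
      by (rule sum_by_value) (use finD wtle in auto)
    also have "\<dots> = (\<Sum>w\<le>n. of_nat (3 * b w) * XX ^ w)"
    proof (rule sum.cong[OF refl])
      fix w
      have "{c\<in>D - {z}. wt c = w} = {c\<in>D. c \<noteq> replicate n 0 \<and> wt c = w}" by (auto simp: z_def)
      then show "of_nat (card {c\<in>D - {z}. wt c = w}) * XX ^ w = of_nat (3 * b w) * XX ^ w"
        using kab[of w] by (simp add: ka_def)
    qed
    also have "\<dots> = 3 * Ph" unfolding Ph_def by (rule sm)
    finally show ?thesis .
  qed
  have C2: "(\<Sum>c\<in>D. XX ^ wt c) = 1 + 3 * Rh + XX * (3 * Mh)"
  proof -
    have "(\<Sum>c\<in>D. XX ^ wt c) = XX ^ wt z + ((\<Sum>c\<in>S0. XX ^ wt c) + (\<Sum>c\<in>S1. XX ^ wt c))"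
      unfolding Dsplit using finS zS disj by (simp add: sum.union_disjoint)
    also have "XX ^ wt z = 1" by (simp add: z_def)
    also have "(\<Sum>c\<in>S0. XX ^ wt c) = (\<Sum>c\<in>S0. XX ^ wp 0 c)"
      by (rule sum.cong) (auto simp: S0_def wt_split[of 0] len n0)
    also have "(\<Sum>c\<in>S1. XX ^ wt c) = (\<Sum>c\<in>S1. XX * XX ^ wp 0 c)"
      by (rule sum.cong) (auto simp: S1_def wt_split[of 0] len n0)
    also have "(\<Sum>c\<in>S0. XX ^ wp 0 c) = 3 * Rh" unfolding sumS0 k0r Rh_def by (rule sm)
    also have "(\<Sum>c\<in>S1. XX * XX ^ wp 0 c) = XX * (3 * Mh)"
      unfolding sum_distrib_left[symmetric] sumS1 k1m Mh_def sm by simp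
    finally show ?thesis by (simp add: add.assoc)
  qed
  have PRM: "Ph = Rh + XX * Mh"
  proof -
    have "3 * Ph = 3 * (Rh + XX * Mh)" using C1 C2 by (simp add: algebra_simps)
    moreover have "(3::int poly) \<noteq> 0" by simp
    ultimately show ?thesis using mult_left_cancel by blast
  qed
  have cardD: "card D = 64^m"
  proof -
    have "card D ^ 2 = 4 ^ n" by (rule card_D[OF sd[folded n_def] n0])
    also have "(4::nat) ^ n = (64^m)^2"
    proof -
      have "(4::nat) ^ n = (4^3)^(m*2)" unfolding power_mult[symmetric] n_def by (simp add: mult.commute)
      also have "\<dots> = (64^m)^2" by (simp add: power_mult)
      finally show ?thesis .
    qed
    finally show ?thesis by (simp add: power2_eq_iff_nonneg)
  qed
  have MW: "of_nat (card D) * (1 + 3*Rh + 3*Mh) = 4 * (1 + 3*XX)^(n - 1) + 4 * T"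
    using macwilliams[OF sd[folded n_def] n0] A B by simp
  have dT: "(9::int poly) dvd (T - 3 * Rc)"
  proof -
    have "T - 3 * Rc = (\<Sum>w\<le>n. of_nat (3 * r w) * ((1 + 3*XX)^(n - 1 - w) * (1 - XX)^w) - 3 * smult (int (r w)) ((1 - XX)^w))"
      by (simp add: T_def Rc_def k0r sum_subtractf sum_distrib_left)
    also have "\<dots> = (\<Sum>w\<le>n. 3 * smult (int (r w)) (((1 + 3*XX)^(n - 1 - w) - 1) * (1 - XX)^w))"
    proof (rule sum.cong[OF refl])
      fix w
      have e: "of_nat (3 * r w) * G = 3 * smult (int (r w)) (G::int poly)" for G
        by (simp add: of_nat_poly numeral_poly mult.commute)
      show "of_nat (3 * r w) * ((1 + 3*XX)^(n - 1 - w) * (1 - XX)^w) - 3 * smult (int (r w)) ((1 - XX)^w)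
          = 3 * smult (int (r w)) (((1 + 3*XX)^(n - 1 - w) - 1) * (1 - XX)^w)"
        unfolding e by (simp add: algebra_simps smult_diff_right)
    qed
    also have "(9::int poly) dvd \<dots>"
    proof (rule dvd_sum)
      fix w
      obtain E where "(1 + 3*XX)^(n - 1 - w) - 1 = 3 * E" using pow13'[of "n - 1 - w"] by (auto elim: dvdE)
      then have "3 * smult (int (r w)) (((1 + 3*XX)^(n - 1 - w) - 1) * (1 - XX)^w) = 9 * smult (int (r w)) (E * (1 - XX)^w)"
        by simp
      then show "(9::int poly) dvd 3 * smult (int (r w)) (((1 + 3*XX)^(n - 1 - w) - 1) * (1 - XX)^w)"
        by (metis dvd_triv_left)
    qed
    finally show ?thesis .
  qed
  have dC: "(9::int poly) dvd (of_nat (card D) - 1)"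
  proof -
    obtain K where K: "(64::int)^m = 1 + 9*K" using pow64 by blast
    have "(of_nat (card D) :: int poly) - 1 = of_int ((64::int)^m - 1)" unfolding cardD by simp
    also have "\<dots> = 9 * of_int K" using K by simp
    finally show ?thesis by (metis dvd_triv_left)
  qed
  define Q where "Q = Rh + Mh - 1 - 4 * of_nat (n - 1) * XX - 4 * Rc"
  have "3 * Q = 4 * ((1 + 3*XX)^(n - 1) - 1 - 3 * of_nat (n - 1) * XX) + 4 * (T - 3 * Rc)
      - (of_nat (card D) - 1) * (1 + 3*Rh + 3*Mh)"
    unfolding Q_def by (rule ring_id[OF MW])
  moreover have "(9::int poly) dvd ((1 + 3*XX)^(n - 1) - 1 - 3 * of_nat (n - 1) * XX)"
    using pow13[of "n - 1"] by simp
  ultimately have "(9::int poly) dvd 3 * Q" using dT dC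
    by (metis (no_types) dvd_diff dvd_add dvd_mult[of 9 _ 4] dvd_mult2)
  then obtain Y where "3 * Q = 9 * Y" by (auto elim: dvdE)
  then have "3 * Q = 3 * (3 * Y)" by simp
  then have Q3: "Q = 3 * Y" using mult_left_cancel[of "3::int poly"] by simp
  define R where "R = psi Rh"
  define M where "M = psi Mh"
  define P where "P = psi Ph"
  have psiQ: "psi Q = 0" unfolding Q3 by (simp add: psi_smult numeral_poly three_f3)
  have Rsum: "R = (\<Sum>w\<le>n. smult (of_int (int (r w))) (YY^w))"
    unfolding R_def Rh_def by (simp add: psi_sum psi_smult psi_power psi_X)
  have Msum: "M = (\<Sum>w\<le>n. smult (of_int (int (mm w))) (YY^w))"
    unfolding M_def Mh_def by (simp add: psi_sum psi_smult psi_power psi_X)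
  have Psum: "P = (\<Sum>w\<le>n. smult (of_int (int (b w))) (YY^w))"
    unfolding P_def Ph_def by (simp add: psi_sum psi_smult psi_power psi_X)
  have psiRc: "psi Rc = pcompose R [:1,-1:]"
  proof -
    have "psi Rc = (\<Sum>w\<le>n. smult (of_int (int (r w))) ((1 - YY)^w))"
      unfolding Rc_def by (simp add: psi_sum psi_smult psi_power psi_X psi_diff psi_one)
    also have "\<dots> = pcompose R [:1,-1:]"
      unfolding Rsum pcompose_sum pcompose_smult pcompose_power_left
    proof (rule sum.cong[OF refl])
      fix w
      have "pcompose YY [:1,-1:] = 1 - YY" by (simp add: pcompose_pCons one_pCons)
      then show "smult (of_int (int (r w))) ((1 - YY)^w) = smult (of_int (int (r w))) ((pcompose YY [:1,-1:])^w)"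
        by simp
    qed
    finally show ?thesis .
  qed
  have c4: "(4::f3 poly) = 1"
  proof -
    have "(4::f3) = 1" using of_nat_f3[of 4] by (simp add: one_f3_def)
    then show ?thesis by (simp add: numeral_poly one_pCons)
  qed
  have cn: "(of_nat (n - 1) :: f3 poly) = -1"
  proof -
    have "n - 1 = 3*(2*m - 1) + 2" using m unfolding n_def by linarith
    moreover have "(3*k + 2) mod 3 = (2::nat)" for k by presburger
    ultimately have "(n - 1) mod 3 = 2" by metis
    then have "(of_nat (n - 1) :: f3) = E2" using of_nat_f3[of "n - 1"] by simp
    moreover have "(-1::f3) = E2" by (simp add: one_f3_def)
    ultimately have "(of_nat (n - 1) :: f3) = -1" by simp
    moreover have "[:-1:] = (-1 :: f3 poly)" by (simp add: poly_eq_iff coeff_pCons coeff_1 split: nat.splits)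
    ultimately show ?thesis by (simp add: of_nat_poly)
  qed
  have "psi Q = R + M - 1 - 4 * of_nat (n - 1) * YY - 4 * psi Rc"
    unfolding Q_def R_def M_def by (simp only: psi_diff psi_add psi_mult psi_numeral psi_of_nat psi_X psi_one)
  then have "R + M - 1 - 4 * of_nat (n - 1) * YY - 4 * psi Rc = 0" using psiQ by simp
  then have "R + M - 1 - (1 * (-1)) * YY - 1 * pcompose R [:1,-1:] = 0" by (simp only: c4 cn psiRc)
  then have E: "R + M = 1 - YY + pcompose R [:1,-1:]"
    by (metis (no_types, lifting) add_diff_cancel_left' diff_add_cancel diff_minus_eq_add eq_iff_diff_eq_0 mult_1 mult_minus_left minus_diff_eq add.commute diff_diff_eq2)
  have wtsplit0: "wt c = wp 0 c + (if c!0 = Z4 then 0 else 1)" if "c \<in> D" for c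
    using wt_split[of 0 c] len[OF that] n0 by simp
  have k0z: "k0 w = 0" if "odd w \<or> w > 6*m - 2" for w
  proof -
    have "{c\<in>D. c \<noteq> replicate n 0 \<and> (c!0 = Z4 \<and> wp 0 c = w)} = {}"
    proof (rule ccontr)
      assume "{c\<in>D. c \<noteq> replicate n 0 \<and> (c!0 = Z4 \<and> wp 0 c = w)} \<noteq> {}"
      then obtain c where c: "c \<in> D" "c!0 = Z4" "wp 0 c = w" by auto
      have ev: "even (wt c)" by (rule wt_even[OF sd c(1)])
      have "wt c = w" using wtsplit0[OF c(1)] c by simp
      moreover have "w \<le> n - 1" using wp_le[of 0 c] len[OF c(1)] n0 c by simp
      ultimately show False using that ev unfolding n_def by presburger
    qed
    then show ?thesis unfolding k0_def by (simp only: card.empty)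
  qed
  have k1z: "k1 w = 0" if "even w" for w
  proof -
    have "{c\<in>D. c \<noteq> replicate n 0 \<and> (c!0 \<noteq> Z4 \<and> wp 0 c = w)} = {}"
    proof (rule ccontr)
      assume "{c\<in>D. c \<noteq> replicate n 0 \<and> (c!0 \<noteq> Z4 \<and> wp 0 c = w)} \<noteq> {}"
      then obtain c where c: "c \<in> D" "c!0 \<noteq> Z4" "wp 0 c = w" by auto
      have ev: "even (wt c)" by (rule wt_even[OF sd c(1)])
      have "wt c = w + 1" using wtsplit0[OF c(1)] c by simp
      then show False using that ev by simp
    qed
    then show ?thesis unfolding k1_def by (simp only: card.empty)
  qed
  have kaz: "ka w = 0" if "w < 2*m" for w
  proof -
    have "{c\<in>D. c \<noteq> replicate n 0 \<and> wt c = w} = {}"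
      using mw that unfolding n_def by fastforce
    then show ?thesis unfolding ka_def by (simp only: card.empty)
  qed
  have coeffR: "coeff R k = (if k \<le> n then of_int (int (r k)) else 0)" for k
    unfolding Rsum by (rule coeff_sum_smult_X)
  have coeffM: "coeff M k = (if k \<le> n then of_int (int (mm k)) else 0)" for k
    unfolding Msum by (rule coeff_sum_smult_X)
  have coeffP: "coeff P k = (if k \<le> n then of_int (int (b k)) else 0)" for k
    unfolding Psum by (rule coeff_sum_smult_X)
  have ev: "\<forall>k. odd k \<longrightarrow> coeff R k = 0"
    using k0z k0r by (auto simp: coeffR)
  have od: "\<forall>k. even k \<longrightarrow> coeff M k = 0"
    using k1z k1m by (auto simp: coeffM)
  have Pdef: "P = R + YY * M"
    unfolding P_def R_def M_def PRM by (simp only: psi_add psi_mult psi_X)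
  have deg: "degree R \<le> 6*m - 2"
  proof (rule degree_le, intro allI impI)
    fix i assume "6*m - 2 < i"
    then show "coeff R i = 0" using k0z[of i] k0r[of i] by (simp add: coeffR)
  qed
  have low: "\<forall>k<2*m. coeff P k = 0"
    using kaz kab by (auto simp: coeffP)
  have P0: "P = 0" by (rule f3_main[OF E ev od Pdef deg low m])
  have "(of_int (int (b w)) :: f3) = 0" using coeffP[of w] P0 w by (simp add: n_def)
  then have "3 dvd int (b w)" by (rule of_int_f3_zero)
  then have "3 dvd b w" by presburger
  then have "9 dvd ka w" using kab[of w] by auto
  moreover have "{c\<in>D. wt c = w} = {c\<in>D. c \<noteq> replicate n 0 \<and> wt c = w}"
    using w by auto
  ultimately show ?thesis by (simp add: ka_def)
qed

theorem theorem3p5: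
  fixes m :: nat and D :: "f4 list set"
  assumes "m > 0"
    and "near_extremal (6 * m) D"
  shows "\<forall>i\<in>{m..3 * m}. (9::nat) dvd A_count D (2 * i)"
proof
  fix i assume i: "i \<in> {m..3 * m}"
  have sd: "herm_self_dual (6*m) D" and mwd: "min_weight (6*m) D = 2*m"
    using assms(2) by (auto simp: near_extremal_def)
  have finD: "finite D" using sd_facts(6)[OF sd] .
  have mw: "2*m \<le> wt c" if "c \<in> D" "c \<noteq> replicate (6*m) 0" for c
  proof -
    have fin: "finite {wt x | x. x \<in> D \<and> x \<noteq> replicate (6*m) 0}"
      using finD by simp
    have "wt c \<in> {wt x | x. x \<in> D \<and> x \<noteq> replicate (6*m) 0}" using that by blast
    then have "Min {wt x | x. x \<in> D \<and> x \<noteq> replicate (6*m) 0} \<le> wt c" using fin by (rule Min_le[rotated])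
    then show ?thesis using mwd unfolding min_weight_def by simp
  qed
  have "9 dvd card {c\<in>D. wt c = 2*i}"
    by (rule main_lemma[OF sd assms(1) mw]) (use i assms(1) in auto)
  then show "(9::nat) dvd A_count D (2 * i)" by (simp add: A_count_def)
qed

end
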